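(* Let $a\in\mathbb{R}^{p+1}$ (i.e. $a=\sum_{s=0}^pa_sv_s$ with $a_s\in\mathbb{R}$) and $\underline{\omega}\in\mathbb{S}$. Then for every $b\in\mathbb{A}$, $$a(\underline{\omega}b)=\underline{\omega}(a^cb).$$
   Context: Let $\mathbb{A}$ be a real alternative algebra (the associator $[a,b,c]=(ab)c-a(bc)$ is an alternating trilinear function) with unity $1$, of finite real dimension $d>1$, equipped with an anti-involution $a\mapsto a^c$ (real linear, $a^c=a$ for real $a$, $(a^c)^c=a$, $(ab)^c=b^ca^c$). Let $t(x)=x+x^c$, $n(x)=xx^c$, $\mathbb{S}_{\mathbb{A}}=\{x: t(x)=0,\ n(x)=1\}$ (assumed nonempty) and $Q_{\mathbb{A}}=\mathbb{R}\cup\{x: t(x)\in\mathbb{R},\ n(x)\in\mathbb{R},\ 4n(x)>t(x)^2\}$. Let $M$ be a real subspace with $\mathbb{R}\subsetneq M\subseteq Q_{\mathbb{A}}$ having a basis $(v_0,\dots,v_m)$, $m\ge1$, $v_0=1$, $v_s\in\mathbb{S}_{\mathbb{A}}$, $v_sv_t=-v_tv_s$ for distinct $s,t\ge1$. Fix $p\in\{0,\dots,m-1\}$; $\mathbb{R}^{p+1}$ denotes the span of $v_0,\dots,v_p$ and $\mathbb{S}=\{\sum_{s=p+1}^mx_sv_s: x_s\in\mathbb{R},\ \sum_{s=p+1}^m x_s^2=1\}$. *)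

theory Defs
  imports "HOL-Analysis.Analysis"
begin

text \<open>A real algebra is modelled as a real vector space 'a together with a
bilinear multiplication mul and a unit element one. The real numbers are
identified with the line spanned by one.\<close>

definition assoc :: "('a::real_vector \<Rightarrow> 'a \<Rightarrow> 'a) \<Rightarrow> 'a \<Rightarrow> 'a \<Rightarrow> 'a \<Rightarrow> 'a" where
  "assoc mul a b c = mul (mul a b) c - mul a (mul b c)"

definition is_real :: "'a::real_vector \<Rightarrow> 'a \<Rightarrow> bool" where
  "is_real one x \<longleftrightarrow> (\<exists>r::real. x = r *\<^sub>R one)"

definition alt_algebra :: "('a::real_vector \<Rightarrow> 'a \<Rightarrow> 'a) \<Rightarrow> 'a \<Rightarrow> bool" where
  "alt_algebra mul one \<longleftrightarrow>
     bilinear mul \<and>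
     (\<forall>x. mul one x = x \<and> mul x one = x) \<and>
     (\<forall>x y. assoc mul x x y = 0 \<and> assoc mul x y x = 0 \<and> assoc mul y x x = 0) \<and>
     (\<exists>B :: 'a set. finite B \<and> independent B \<and> span B = UNIV \<and> card B > 1)"

definition anti_involution :: "('a::real_vector \<Rightarrow> 'a \<Rightarrow> 'a) \<Rightarrow> 'a \<Rightarrow> ('a \<Rightarrow> 'a) \<Rightarrow> bool" where
  "anti_involution mul one cj \<longleftrightarrow>
     linear cj \<and>
     (\<forall>r::real. cj (r *\<^sub>R one) = r *\<^sub>R one) \<and>
     (\<forall>x. cj (cj x) = x) \<and>
     (\<forall>a b. cj (mul a b) = mul (cj b) (cj a))"

definition trace_A :: "('a::real_vector \<Rightarrow> 'a) \<Rightarrow> 'a \<Rightarrow> 'a" where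
  "trace_A cj x = x + cj x"

definition norm_A :: "('a::real_vector \<Rightarrow> 'a \<Rightarrow> 'a) \<Rightarrow> ('a \<Rightarrow> 'a) \<Rightarrow> 'a \<Rightarrow> 'a" where
  "norm_A mul cj x = mul x (cj x)"

definition sphere_A :: "('a::real_vector \<Rightarrow> 'a \<Rightarrow> 'a) \<Rightarrow> 'a \<Rightarrow> ('a \<Rightarrow> 'a) \<Rightarrow> 'a set" where
  "sphere_A mul one cj = {x. trace_A cj x = 0 \<and> norm_A mul cj x = one}"

definition quadratic_cone :: "('a::real_vector \<Rightarrow> 'a \<Rightarrow> 'a) \<Rightarrow> 'a \<Rightarrow> ('a \<Rightarrow> 'a) \<Rightarrow> 'a set" where
  "quadratic_cone mul one cj =
     {x. is_real one x} \<union>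
     {x. \<exists>t n :: real. trace_A cj x = t *\<^sub>R one \<and> norm_A mul cj x = n *\<^sub>R one \<and> 4 * n > t ^ 2}"

end

theory Submission
  imports Defs
begin

lemma grp_aux:
  fixes a1 a2 a3 a4 b1 b2 b3 b4 A B C :: "'a::ab_group_add"
  assumes "A - B = 0" "a1 - b1 = 0" "a4 - b4 = 0"
    "A = a1 + a2 + a3 + a4" "B = b1 + b2 + (b3 + b4)" "C = a2 + a3"
  shows "b2 + b3 = C"
proof -
  have "a1 + a2 + a3 + a4 - (b1 + b2 + (b3 + b4)) = 0" using assms by simp
  moreover have "a1 = b1" "a4 = b4" using assms(2,3) by simp_all
  ultimately show ?thesis using assms(6) by (simp add: algebra_simps)
qed

theorem lemma3p2:
  fixes mul :: "'a::real_vector \<Rightarrow> 'a \<Rightarrow> 'a"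
    and one :: 'a and cj :: "'a \<Rightarrow> 'a"
    and v :: "nat \<Rightarrow> 'a" and m p :: nat
    and as xs :: "nat \<Rightarrow> real" and b :: 'a
  assumes alg: "alt_algebra mul one"
    and inv: "anti_involution mul one cj"
    and S_ne: "sphere_A mul one cj \<noteq> {}"
    and m: "1 \<le> m"
    and v0: "v 0 = one"
    and vS: "\<And>s. 1 \<le> s \<Longrightarrow> s \<le> m \<Longrightarrow> v s \<in> sphere_A mul one cj"
    and vanti: "\<And>s t. 1 \<le> s \<Longrightarrow> s \<le> m \<Longrightarrow> 1 \<le> t \<Longrightarrow> t \<le> m \<Longrightarrow> s \<noteq> t \<Longrightarrow>
                  mul (v s) (v t) = - mul (v t) (v s)"
    and vinj: "inj_on v {0..m}"
    and vind: "independent (v ` {0..m})"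
    and MQ: "span (v ` {0..m}) \<subseteq> quadratic_cone mul one cj"
    and p: "p < m"
    and xs: "(\<Sum>s=p+1..m. (xs s)\<^sup>2) = 1"
  shows "mul (\<Sum>s=0..p. as s *\<^sub>R v s) (mul (\<Sum>s=p+1..m. xs s *\<^sub>R v s) b)
       = mul (\<Sum>s=p+1..m. xs s *\<^sub>R v s) (mul (cj (\<Sum>s=0..p. as s *\<^sub>R v s)) b)"
proof -
  define W where "W = (\<Sum>s=p+1..m. xs s *\<^sub>R v s)"
  have bil: "bilinear mul" and unit: "\<And>x. mul one x = x \<and> mul x one = x"
    and alt: "\<And>x y. assoc mul x x y = 0"
    using alg unfolding alt_algebra_def by auto
  have l1: "linear (mul x)" for x using bil unfolding bilinear_def by auto
  have l2: "linear (\<lambda>x. mul x y)" for y using bil unfolding bilinear_def by auto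
  have cjl: "linear cj" and cj1: "cj one = one"
  proof -
    show "linear cj" using inv unfolding anti_involution_def by blast
    have "cj (1 *\<^sub>R one) = 1 *\<^sub>R one" using inv unfolding anti_involution_def by blast
    then show "cj one = one" by simp
  qed
  have key: "mul x (mul y c) + mul y (mul x c) = mul (mul x y + mul y x) c" for x y c
  proof -
    have "assoc mul (x+y) (x+y) c = 0" by (rule alt)
    then have "mul (mul (x+y) (x+y)) c - mul (x+y) (mul (x+y) c) = 0"
      unfolding assoc_def .
    moreover have "assoc mul x x c = 0" "assoc mul y y c = 0" using alt by auto
    moreover have "mul (mul (x+y) (x+y)) c = mul (mul x x) c + mul (mul x y) c + mul (mul y x) c + mul (mul y y) c"
      by (simp only: linear_add[OF l1] linear_add[OF l2] add_ac)
    moreover have "mul (x+y) (mul (x+y) c) = mul x (mul x c) + mul x (mul y c) + (mul y (mul x c) + mul y (mul y c))"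
      by (simp only: linear_add[OF l1] linear_add[OF l2] add_ac)
    moreover have "mul (mul x y + mul y x) c = mul (mul x y) c + mul (mul y x) c"
      by (simp only: linear_add[OF l2])
    ultimately show ?thesis
      unfolding assoc_def by (rule grp_aux)
  qed
  have anti: "mul (v s) W = - mul W (v s)" if "1 \<le> s" "s \<le> p" for s
  proof -
    have "mul (v s) W = (\<Sum>t=p+1..m. xs t *\<^sub>R mul (v s) (v t))"
      unfolding W_def by (simp add: linear_sum[OF l1] linear_scale[OF l1])
    also have "\<dots> = (\<Sum>t=p+1..m. - (xs t *\<^sub>R mul (v t) (v s)))"
      proof (rule sum.cong[OF refl])
      fix t assume "t \<in> {p+1..m}"
      then have "mul (v s) (v t) = - mul (v t) (v s)" using that p by (intro vanti) auto
      then show "xs t *\<^sub>R mul (v s) (v t) = - (xs t *\<^sub>R mul (v t) (v s))" by simp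
    qed
    also have "\<dots> = - mul W (v s)"
      unfolding W_def by (simp add: linear_sum[OF l2] linear_scale[OF l2] sum_negf)
    finally show ?thesis .
  qed
  have trm: "mul (v s) (mul W b) = mul W (mul (cj (v s)) b)" if "s \<le> p" for s
  proof (cases "s = 0")
    case True
    then have vs: "v s = one" using v0 by simp
    have "cj (v s) = one" unfolding vs by (rule cj1)
    then show ?thesis unfolding vs using unit by simp
  next
    case False
    then have s1: "1 \<le> s" by simp
    have "v s \<in> sphere_A mul one cj" using vS[OF s1] that p by linarith
    then have "v s + cj (v s) = 0" unfolding sphere_A_def trace_A_def by simp
    then have cjv: "cj (v s) = - v s" by (simp only: add_eq_0_iff)
    have "mul (v s) (mul W b) + mul W (mul (v s) b) = mul (mul (v s) W + mul W (v s)) b"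
      by (rule key)
    also have "\<dots> = 0" using anti[OF s1 that] by (simp add: linear_0[OF l2])
    finally have sum0: "mul (v s) (mul W b) + mul W (mul (v s) b) = 0" .
    have "mul W (mul (cj (v s)) b) = - mul W (mul (v s) b)"
      unfolding cjv by (simp only: linear_neg[OF l1] linear_neg[OF l2])
    then show ?thesis using sum0 by (simp only: add_eq_0_iff2)
  qed
  have e1: "mul (\<Sum>s=0..p. as s *\<^sub>R v s) (mul W b) = (\<Sum>s=0..p. as s *\<^sub>R mul (v s) (mul W b))"
    by (simp only: linear_sum[OF l2] linear_scale[OF l2])
  have e2: "(\<Sum>s=0..p. as s *\<^sub>R mul (v s) (mul W b)) = (\<Sum>s=0..p. as s *\<^sub>R mul W (mul (cj (v s)) b))"
    by (rule sum.cong[OF refl]) (simp only: trm atLeastAtMost_iff)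
  have e3: "mul W (mul (cj (\<Sum>s=0..p. as s *\<^sub>R v s)) b) = (\<Sum>s=0..p. as s *\<^sub>R mul W (mul (cj (v s)) b))"
    by (simp only: linear_sum[OF l1] linear_scale[OF l1] linear_sum[OF l2] linear_scale[OF l2]
        linear_sum[OF cjl] linear_scale[OF cjl])
  show ?thesis unfolding W_def[symmetric] e1 e2 e3 ..
qed

end
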